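(* Let $N=3$, $p>5$, $\lambda>0$ and $b>0$. If the problem \[ u''+\frac{2}{r}u'+\lambda u+u^p=0,\ r\in(0,b),\qquad u'(0)=u(b)=0, \] has a positive solution, then \[ \frac{1}{\sqrt{\lambda}}\left(\frac{2\sqrt{2(p-5)}}{p+3}+\arccos\left(-\sqrt{\frac{p-5}{p+3}}\right)\right)<b<\frac{\pi}{\sqrt{\lambda}}, \] equivalently \[ \frac{1}{\pi^2}\left(\frac{2\sqrt{2(p-5)}}{p+3}+\arccos\left(-\sqrt{\frac{p-5}{p+3}}\right)\right)^2\lambda_1(B(b))<\lambda<\lambda_1(B(b)), \] where $\lambda_1(B(b))=\pi^2/b^2$.
   Context: $\lambda_1(B(b))$ is the first Dirichlet eigenvalue of $-\Delta$ on the ball of radius $b$ in $\mathbb{R}^3$. A positive solution is one positive on $[0,b)$. *)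

theory Defs
  imports "HOL-Analysis.Analysis"
begin

definition positive_radial_solution :: "real \<Rightarrow> real \<Rightarrow> real \<Rightarrow> (real \<Rightarrow> real) \<Rightarrow> bool" where
  "positive_radial_solution p lam b u \<longleftrightarrow>
     (\<exists>du :: real \<Rightarrow> real.
        continuous_on {0..b} u \<and>
        (\<forall>r\<in>{0..<b}. (u has_real_derivative du r) (at r within {0..b})) \<and>
        (\<forall>r\<in>{0<..<b}. \<exists>d2. (du has_real_derivative d2) (at r) \<and>
              d2 + 2 / r * du r + lam * u r + (u r) powr p = 0) \<and>
        du 0 = 0 \<and> u b = 0 \<and>
        (\<forall>r\<in>{0..<b}. u r > 0))"

end

theory Submission
  imports Defs
begin


lemma key_trig:
  fixes c s :: real
  assumes c: "0 < c" "c < 1" and s: "pi/2 < s" "s < pi"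
  shows "c^2 * sin s + (arccos (- c) + c * sqrt (1 - c^2) - s) * cos s \<ge> 0"
proof -
  define th where "th = arccos (- c)"
  have cth: "cos th = - c" unfolding th_def using c by simp
  have sth: "sin th = sqrt (1 - c^2)" unfolding th_def using c by (simp add: sin_arccos)
  have th0: "0 \<le> th" "th \<le> pi" unfolding th_def using c arccos_bounded by auto
  have cos_neg: "cos x < 0" if "pi/2 < x" "x \<le> pi" for x
    using cos_mono_less_eq[of x "pi/2"] that by auto
  have thpi2: "pi/2 < th"
  proof (rule ccontr)
    assume "\<not> pi/2 < th"
    then have "cos th \<ge> 0" using th0 by (intro cos_ge_zero) auto
    with cth c show False by simp
  qed
  define m where "m x = x - c^2 * tan x" for x
  have dm: "DERIV m x :> 1 - c^2 * inverse ((cos x)^2)" if "cos x \<noteq> 0" for x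
    unfolding m_def using that by (auto intro!: derivative_eq_intros)
  have mth: "m th = th + c * sqrt (1 - c^2)"
    unfolding m_def tan_def using cth sth c by (simp add: power2_eq_square field_simps)
  have "m th \<le> m s"
  proof (cases "s \<le> th")
    case True
    show ?thesis
    proof (rule DERIV_nonpos_imp_nonincreasing[OF True])
      fix x assume x: "s \<le> x" "x \<le> th"
      have cx: "cos x < 0" using cos_neg[of x] x s th0 by auto
      have "cos th \<le> cos x" using cos_mono_le_eq[of th x] x s th0 by auto
      then have "(- cos x)^2 \<le> c^2" using cx cth
        by (intro power_mono) auto
      then have "(cos x)^2 \<le> c^2" by simp
      then have "c^2 * inverse ((cos x)^2) \<ge> 1" using cx
        by (simp add: field_simps)
      then show "\<exists>y. DERIV m x :> y \<and> y \<le> 0" using dm[of x] cx by (intro exI[of _ "1 - c^2 * inverse ((cos x)^2)"]) auto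
    qed
  next
    case False
    show ?thesis
    proof (rule DERIV_nonneg_imp_nondecreasing[of th s m])
      show "th \<le> s" using False by simp
      fix x assume x: "th \<le> x" "x \<le> s"
      have cx: "cos x < 0" using cos_neg[of x] x s thpi2 by auto
      have "cos x \<le> cos th" using cos_mono_le_eq[of x th] x s th0 by auto
      then have "c^2 \<le> (- cos x)^2" using cx cth c
        by (intro power_mono) auto
      then have "c^2 \<le> (cos x)^2" by simp
      then have "c^2 * inverse ((cos x)^2) \<le> 1" using cx
        by (simp add: field_simps)
      then show "\<exists>y. DERIV m x :> y \<and> y \<ge> 0" using dm[of x] cx by (intro exI[of _ "1 - c^2 * inverse ((cos x)^2)"]) auto
    qed
  qed
  have cs: "cos s < 0" using cos_neg s by auto
  have "c^2 * sin s + (th + c * sqrt (1 - c^2) - s) * cos s = cos s * (m th - m s)"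
    unfolding mth unfolding m_def tan_def using cs by (simp add: field_simps)
  also have "\<dots> \<ge> 0" using cs \<open>m th \<le> m s\<close> by (simp add: mult_nonpos_nonpos)
  finally show ?thesis unfolding th_def .
qed



lemma c_identity:
  fixes p :: real assumes "p > 5"
  shows "sqrt ((p-5)/(p+3)) * sqrt (1 - (sqrt ((p-5)/(p+3)))^2) = 2 * sqrt (2*(p-5)) / (p+3)"
proof -
  have q: "(sqrt ((p-5)/(p+3)))^2 = (p-5)/(p+3)" using assms by simp
  have "sqrt ((p-5)/(p+3)) * sqrt (1 - (p-5)/(p+3)) = sqrt ((p-5)/(p+3) * (1 - (p-5)/(p+3)))"
    by (rule real_sqrt_mult[symmetric])
  also have "\<dots> = 2 * sqrt (2*(p-5)) / (p+3)"
  proof (rule real_sqrt_unique)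
    show "(2 * sqrt (2*(p-5)) / (p+3))^2 = (p-5)/(p+3) * (1 - (p-5)/(p+3))"
      using assms by (simp add: power_divide power_mult_distrib field_simps) (simp add: power2_eq_square algebra_simps)
    show "0 \<le> 2 * sqrt (2*(p-5)) / (p+3)" using assms by simp
  qed
  finally show ?thesis using q by simp
qed

lemma h_nonneg:
  fixes p bt x :: real
  assumes p: "p > 5" and bt: "0 < bt" "bt < pi"
    and btT: "bt \<le> 2 * sqrt (2 * (p - 5)) / (p + 3) + arccos (- sqrt ((p - 5) / (p + 3)))"
    and x: "0 \<le> x" "x \<le> bt"
  shows "(p-1)*(cos(bt-2*x) - cos bt) - (p+3)*x* sin(bt-2*x) \<ge> 0"
proof (cases "x \<ge> bt/2")
  case True
  have "cos (2*x - bt) \<ge> cos bt" using True x bt by (subst cos_mono_le_eq) auto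
  moreover have "cos (bt - 2*x) = cos (2*x - bt)" by (metis cos_minus minus_diff_eq)
  ultimately have c1: "cos (bt - 2*x) - cos bt \<ge> 0" by simp
  have "sin (2*x - bt) \<ge> 0" using True x bt by (intro sin_ge_zero) auto
  then have "sin (bt - 2*x) \<le> 0" by (metis minus_diff_eq neg_0_le_iff_le sin_minus)
  then have "(p+3)*x* sin(bt-2*x) \<le> 0" using p x by (simp add: mult_nonneg_nonpos)
  moreover have "(p-1)*(cos(bt-2*x) - cos bt) \<ge> 0" using p c1 by simp
  ultimately show ?thesis by linarith
next
  case False
  define H where "H y = (p-1)*(cos(bt-2*y) - cos bt) - (p+3)*y* sin(bt-2*y)" for y
  define c where "c = sqrt ((p-5)/(p+3))"
  have c: "0 < c" "c < 1" unfolding c_def using p by (auto simp: real_sqrt_less_iff[of _ 1, simplified])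
  have c2: "c^2 = (p-5)/(p+3)" unfolding c_def using p by simp
  have T: "arccos (- c) + c * sqrt (1 - c^2) = 2 * sqrt (2 * (p - 5)) / (p + 3) + arccos (- sqrt ((p - 5) / (p + 3)))"
    unfolding c_def using c_identity[OF p] by simp
  have dH: "DERIV H y :> (p-5)* sin(bt-2*y) + 2*(p+3)*y*cos(bt-2*y)" for y
    unfolding H_def by (auto intro!: derivative_eq_intros simp: algebra_simps)
  have "H 0 \<le> H x"
  proof (rule DERIV_nonneg_imp_nondecreasing[of 0 x H])
    show "0 \<le> x" by fact
    fix y assume y: "0 \<le> y" "y \<le> x"
    define s where "s = bt - 2*y"
    have s: "0 < s" "s \<le> bt" using y False x unfolding s_def by auto
    have ss: "sin s \<ge> 0" using s bt by (intro sin_ge_zero) auto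
    have "(p-5)* sin s + (p+3)*(bt - s)*cos s \<ge> 0"
    proof (cases "cos s \<ge> 0")
      case True
      then show ?thesis using p ss s by (simp add: s_def)
    next
      case False
      then have cs: "cos s < 0" by simp
      have "s > pi/2"
      proof (rule ccontr)
        assume "\<not> pi/2 < s"
        then have "cos s \<ge> 0" using s by (intro cos_ge_zero) auto
        with cs show False by simp
      qed
      then have k: "c^2 * sin s + (arccos (- c) + c * sqrt (1 - c^2) - s) * cos s \<ge> 0"
        using key_trig[OF c, of s] s bt by auto
      have k2: "(p-5)* sin s + (p+3)*(arccos (- c) + c * sqrt (1 - c^2) - s) * cos s \<ge> 0"
      proof -
        have "(p-5)* sin s + (p+3)*(arccos (- c) + c * sqrt (1 - c^2) - s) * cos s
             = (p+3) * (c^2 * sin s + (arccos (- c) + c * sqrt (1 - c^2) - s) * cos s)"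
          using p unfolding c2 by (simp add: field_simps)
        also have "\<dots> \<ge> 0" using p k by simp
        finally show ?thesis .
      qed
      have "(bt - s) * cos s \<ge> (arccos (- c) + c * sqrt (1 - c^2) - s) * cos s"
        using btT T cs by (intro mult_right_mono_neg) auto
      then have "(p+3)*(bt - s)*cos s \<ge> (p+3)*(arccos (- c) + c * sqrt (1 - c^2) - s) * cos s"
        using p by (simp add: mult.assoc)
      then show ?thesis using k2 by linarith
    qed
    moreover have "(p+3)*(bt - s) = 2*(p+3)*y" unfolding s_def by (simp add: algebra_simps)
    ultimately have "(p-5)* sin(bt-2*y) + 2*(p+3)*y*cos(bt-2*y) \<ge> 0" unfolding s_def by (simp add: algebra_simps)
    then show "\<exists>d. DERIV H y :> d \<and> d \<ge> 0" using dH by blast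
  qed
  then show ?thesis unfolding H_def by simp
qed

lemma h_pos:
  fixes p bt :: real
  assumes p: "p > 5" and bt: "0 < bt" "bt < pi"
  shows "(p-1)*(cos(bt-2*(3*bt/4)) - cos bt) - (p+3)*(3*bt/4)* sin(bt-2*(3*bt/4)) > 0"
proof -
  have e1: "bt-2*(3*bt/4) = - (bt/2)" by simp
  have "cos bt < cos (bt/2)" using bt by (subst cos_mono_less_eq) auto
  moreover have "sin (bt/2) > 0" using bt by (intro sin_gt_zero) auto
  ultimately have A: "(p-1)*(cos (bt/2) - cos bt) > 0" "(p+3)*(3*bt/4)* sin(bt/2) > 0"
    using p bt by auto
  show ?thesis unfolding e1 using A by (simp only: cos_minus sin_minus mult_minus_right)
qed



lemma null_times_bounded:
  fixes f g :: "real \<Rightarrow> real"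
  assumes "(f \<longlongrightarrow> 0) F" "eventually (\<lambda>x. \<bar>g x\<bar> \<le> K) F"
  shows "((\<lambda>x. f x * g x) \<longlongrightarrow> 0) F"
proof (rule Lim_null_comparison)
  show "eventually (\<lambda>x. norm (f x * g x) \<le> \<bar>f x\<bar> * K) F"
    using assms(2) by eventually_elim (simp add: abs_mult mult_left_mono)
  have "((\<lambda>x. \<bar>f x\<bar>) \<longlongrightarrow> 0) F" using tendsto_rabs_zero[OF assms(1)] .
  then show "((\<lambda>x. \<bar>f x\<bar> * K) \<longlongrightarrow> 0) F" using tendsto_mult_left_zero by blast
qed

lemma decr_contra:
  fixes Phi dPhi :: "real \<Rightarrow> real"
  assumes c: "0 < c"
    and d: "\<And>r. 0 < r \<Longrightarrow> r < c \<Longrightarrow> (Phi has_real_derivative dPhi r) (at r)"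
    and nonpos: "\<And>r. 0 < r \<Longrightarrow> r < c \<Longrightarrow> dPhi r \<le> 0"
    and m: "0 < m" "m < c" "dPhi m < 0"
    and lim0: "(Phi \<longlongrightarrow> 0) (at_right 0)"
    and limc: "(Phi \<longlongrightarrow> L) (at_left c)" and L: "L \<ge> 0"
  shows False
proof -
  have mono: "Phi t \<le> Phi s" if "0 < s" "s \<le> t" "t < c" for s t
    using that by (intro DERIV_nonpos_imp_nonincreasing[of s t Phi]) (auto intro!: exI d nonpos)
  obtain dd where dd: "dd > 0" "\<And>h. h > 0 \<Longrightarrow> h < dd \<Longrightarrow> Phi m > Phi (m + h)"
    using DERIV_neg_dec_right[OF d[OF m(1,2)] m(3)] by blast
  define x where "x = m + min (dd/2) ((c - m)/2)"
  have x: "m < x" "x < c" using dd(1) m unfolding x_def min_def by (auto simp: field_simps)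
  have "Phi x < Phi m" using dd(2)[of "min (dd/2) ((c - m)/2)"] dd m unfolding x_def by auto
  have "Phi m \<le> 0"
  proof (rule tendsto_lowerbound[OF lim0])
    show "eventually (\<lambda>y. Phi m \<le> Phi y) (at_right 0)"
      unfolding eventually_at_right_field using m by (intro exI[of _ m]) (auto intro!: mono)
  qed simp
  moreover have "L \<le> Phi x"
  proof (rule tendsto_upperbound[OF limc])
    show "eventually (\<lambda>y. Phi y \<le> Phi x) (at_left c)"
      unfolding eventually_at_left_field using x m by (intro exI[of _ x]) (auto intro!: mono)
  qed simp
  ultimately show False using \<open>Phi x < Phi m\<close> L by linarith
qed



lemma du_bounds:
  fixes u du dd :: "real \<Rightarrow> real" and b lam p U :: real
  assumes b: "0 < b" and lam: "0 < lam" and p: "p > 5"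
    and du_w: "\<forall>r\<in>{0..<b}. (u has_real_derivative du r) (at r within {0..b})"
    and du_d: "\<And>r. 0 < r \<Longrightarrow> r < b \<Longrightarrow> (du has_real_derivative dd r) (at r)"
    and dd_eq: "\<And>r. 0 < r \<Longrightarrow> r < b \<Longrightarrow> dd r + 2 / r * du r + lam * u r + (u r) powr p = 0"
    and du0: "du 0 = 0"
    and unn: "\<And>r. 0 \<le> r \<Longrightarrow> r \<le> b \<Longrightarrow> 0 \<le> u r"
    and U: "\<And>r. 0 \<le> r \<Longrightarrow> r \<le> b \<Longrightarrow> u r \<le> U"
  shows "\<exists>e M. e > 0 \<and> (\<forall>r. 0 < r \<longrightarrow> r < e \<longrightarrow> \<bar>du r\<bar> \<le> M)"
    and "\<exists>M. \<forall>r. b/2 \<le> r \<longrightarrow> r < b \<longrightarrow> \<bar>du r\<bar> \<le> M"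
proof -
  have du_at: "(u has_real_derivative du r) (at r)" if "0 < r" "r < b" for r
  proof -
    have "r \<in> {0..<b}" using that by auto
    then have "(u has_real_derivative du r) (at r within {0..b})" using du_w by blast
    moreover have "at r within {0..b} = at r" using that by (intro at_within_interior) auto
    ultimately show ?thesis by simp
  qed
  define K0 where "K0 = lam * U + U powr p"
  have Kb: "0 \<le> lam * u r + u r powr p \<and> lam * u r + u r powr p \<le> K0" if "0 \<le> r" "r \<le> b" for r
  proof -
    have A: "u r powr p \<le> U powr p" using unn[OF that] U[OF that] p by (intro powr_mono2) auto
    have B: "lam * u r \<le> lam * U" using lam U[OF that] by (simp add: mult_left_mono)
    have C: "0 \<le> lam * u r" using lam unn[OF that] by simp
    have D: "0 \<le> u r powr p" by simp
    show ?thesis using A B C D unfolding K0_def by linarith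
  qed
  define G where "G r = r^2 * du r" for r
  have dG: "(G has_real_derivative -(r^2 * (lam * u r + u r powr p))) (at r)" if "0 < r" "r < b" for r
  proof -
    have "(G has_real_derivative (2 * r * du r + r^2 * dd r)) (at r)"
      unfolding G_def by (auto intro!: derivative_eq_intros du_d[OF that])
    moreover have "2 * r * du r + r^2 * dd r = -(r^2 * (lam * u r + u r powr p))"
    proof -
      have "r * dd r + 2 * du r + r * (lam * u r + u r powr p) = r * (dd r + 2 / r * du r + lam * u r + (u r) powr p)"
        using that by (simp add: field_simps)
      also have "\<dots> = 0" using dd_eq[OF that] by simp
      finally have e: "r * dd r = - 2 * du r - r * (lam * u r + u r powr p)" by linarith
      have "2 * r * du r + r^2 * dd r = 2*r*du r + r * (r * dd r)" by (simp add: power2_eq_square)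
      also have "\<dots> = -(r^2 * (lam * u r + u r powr p))" unfolding e by (simp add: algebra_simps power2_eq_square)
      finally show ?thesis .
    qed
    ultimately show ?thesis by simp
  qed
  have dGb: "\<bar>-(r^2 * (lam * u r + u r powr p))\<bar> \<le> r^2 * K0" if "0 < r" "r < b" for r
    using Kb[of r] that by (simp add: abs_mult mult_left_mono)
  show "\<exists>M. \<forall>r. b/2 \<le> r \<longrightarrow> r < b \<longrightarrow> \<bar>du r\<bar> \<le> M"
  proof (intro exI allI impI)
    fix r assume r: "b/2 \<le> r" "r < b"
    define C where "C = \<bar>G (b/2)\<bar> + b * (b^2 * K0)"
    have "\<bar>G r\<bar> \<le> C"
    proof (cases "r = b/2")
      case True
      have "0 \<le> K0" using Kb[of 0] b by auto
      then have "0 \<le> b*(b^2*K0)" using b by simp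
      then show ?thesis unfolding C_def True by simp
    next
      case False
      then have "b/2 < r" using r by simp
      then obtain z where z: "b/2 < z" "z < r" "G r - G (b/2) = (r - b/2) * (-(z^2 * (lam * u z + u z powr p)))"
        using MVT2[of "b/2" r G "\<lambda>z. -(z^2 * (lam * u z + u z powr p))"] dG r b by force
      have "\<bar>-(z^2 * (lam * u z + u z powr p))\<bar> \<le> b^2 * K0"
      proof -
        have "z^2 \<le> b^2" using z r b by (intro power_mono) auto
        then have "z^2 * K0 \<le> b^2 * K0" using Kb[of 0] b by (intro mult_right_mono) auto
        then show ?thesis using dGb[of z] z r b by linarith
      qed
      moreover have "0 \<le> r - b/2" "r - b/2 \<le> b" using r b by auto
      ultimately have "\<bar>(r - b/2) * (-(z^2 * (lam * u z + u z powr p)))\<bar> \<le> b * (b^2 * K0)"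
        by (simp only: abs_mult) (intro mult_mono, auto)
      then show ?thesis using z(3) unfolding C_def by linarith
    qed
    moreover have "\<bar>G r\<bar> = r^2 * \<bar>du r\<bar>" unfolding G_def by (simp add: abs_mult)
    moreover have "(b/2)^2 \<le> r^2" using r b by (intro power_mono) auto
    ultimately have "(b/2)^2 * \<bar>du r\<bar> \<le> C" by (metis abs_ge_zero mult_right_mono order_trans)
    then show "\<bar>du r\<bar> \<le> C / (b/2)^2" using b by (simp add: field_simps)
  qed
  have "(u has_real_derivative du 0) (at 0 within {0..b})" using du_w b by auto
  then have "((\<lambda>y. (u y - u 0) / (y - 0)) \<longlongrightarrow> 0) (at_right 0)"
    using du0 b by (simp add: has_field_derivative_iff at_within_Icc_at_right)
  then have "eventually (\<lambda>y. dist ((u y - u 0) / (y - 0)) 0 < 1) (at_right 0)"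
    by (rule tendstoD) simp
  then obtain d where d: "d > 0" "\<And>y. 0 < y \<Longrightarrow> y < d \<Longrightarrow> \<bar>(u y - u 0) / y\<bar> < 1"
    unfolding eventually_at_right_field by auto
  have ud: "\<bar>u y - u 0\<bar> < y" if "0 < y" "y < d" for y
    using d(2)[OF that] that by (simp add: abs_div)
  show "\<exists>e M. e > 0 \<and> (\<forall>r. 0 < r \<longrightarrow> r < e \<longrightarrow> \<bar>du r\<bar> \<le> M)"
  proof (intro exI conjI allI impI)
    show "min (d/2) (b/2) > 0" using d b by simp
    fix s assume s: "0 < s" "s < min (d/2) (b/2)"
    then have s2: "2* s < d" "2* s < b" by auto
    obtain xi where xi: "s < xi" "xi < 2* s" "u (2* s) - u s = (2* s - s) * du xi"
      using MVT2[of s "2* s" u du] du_at s s2 by force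
    have "\<bar>u (2* s) - u s\<bar> < 3 * s" using ud[of s] ud[of "2* s"] s s2 by linarith
    then have "s * \<bar>du xi\<bar> < 3 * s" using xi(3) s by (simp add: abs_mult)
    then have dxi: "\<bar>du xi\<bar> < 3" using s by simp
    obtain eta where eta: "s < eta" "eta < xi" "G xi - G s = (xi - s) * (-(eta^2 * (lam * u eta + u eta powr p)))"
      using MVT2[of s xi G "\<lambda>z. -(z^2 * (lam * u z + u z powr p))"] dG xi s s2 by force
    have "eta^2 \<le> (2* s)^2" using eta xi s by (intro power_mono) auto
    then have "eta^2 * K0 \<le> (2* s)^2 * K0" using Kb[of 0] b by (intro mult_right_mono) auto
    then have g1: "\<bar>-(eta^2 * (lam * u eta + u eta powr p))\<bar> \<le> 4 * s^2 * K0"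
      using dGb[of eta] eta xi s s2 by (simp add: power_mult_distrib)
    have "\<bar>(xi - s) * (-(eta^2 * (lam * u eta + u eta powr p)))\<bar> \<le> s * (4 * s^2 * K0)"
      using g1 xi by (simp only: abs_mult) (intro mult_mono, auto)
    moreover have "\<bar>G xi\<bar> \<le> (2* s)^2 * 3"
    proof -
      have "\<bar>G xi\<bar> = xi^2 * \<bar>du xi\<bar>" unfolding G_def by (simp add: abs_mult)
      also have "\<dots> \<le> (2* s)^2 * 3" using xi s dxi by (intro mult_mono power_mono) auto
      finally show ?thesis .
    qed
    ultimately have "\<bar>G s\<bar> \<le> (2* s)^2 * 3 + s * (4 * s^2 * K0)" using eta(3) by linarith
    moreover have "\<bar>G s\<bar> = s^2 * \<bar>du s\<bar>" unfolding G_def by (simp add: abs_mult)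
    ultimately have "s^2 * \<bar>du s\<bar> \<le> s^2 * (12 + 4 * s * K0)" by (simp add: algebra_simps power2_eq_square)
    then have "\<bar>du s\<bar> \<le> 12 + 4 * s * K0" using s by simp
    also have "\<dots> \<le> 12 + 4 * b * K0" using s s2 Kb[of 0] b by (intro add_left_mono mult_right_mono) auto
    finally show "\<bar>du s\<bar> \<le> 12 + 4 * b * K0" .
  qed
qed


lemma E_deriv:
  fixes u du q v dv W a aa aaa P :: "real \<Rightarrow> real" and lam c r :: real
  assumes v_d: "(v has_real_derivative dv r) (at r)"
  and dv_d: "(dv has_real_derivative (-(lam * v r) - r * q r)) (at r)"
  and a_d: "(a has_real_derivative aa r) (at r)"
  and aa_d: "(aa has_real_derivative aaa r) (at r)"
  and aaa_d: "(aaa has_real_derivative -4 * lam * aa r) (at r)"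
  and P_d: "(P has_real_derivative
          (lam * (2 * v r * dv r) / 2 + (2 * r * W r + r^2 * (c * q r * du r)) / c)) (at r)"
  and Pr: "P r = lam * (v r)^2 / 2 + r^2 * W r / c"
  and Wr: "W r = q r * u r" and vr: "v r = r * u r" and dvr: "dv r = u r + r * du r"
  and c: "c \<noteq> 0"
  shows "((\<lambda>r. a r * ((dv r)^2 / 2 + P r) + v r * (aaa r * v r / 4 - aa r * dv r / 2)) has_real_derivative
     r * (q r * u r) / (2 * c) * ((c + 2) * r * aa r - 2 * (c - 2) * a r)) (at r)"
  apply (rule DERIV_cong)
   apply (rule derivative_eq_intros v_d dv_d a_d aa_d aaa_d P_d refl | (simp; fail))+
  apply (simp add: Pr Wr vr dvr power2_eq_square)
  using c apply (simp add: field_simps)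
  done


lemma Xbound:
  fixes d D vv V y Y rr B lam p :: real
  assumes "\<bar>d\<bar> \<le> D" "\<bar>vv\<bar> \<le> V" "0 \<le> y" "y \<le> Y" "0 \<le> rr" "rr \<le> B" "lam > 0" "p > 0"
  shows "\<bar>d^2/2 + (lam* vv^2/2 + rr^2* y/(p+1))\<bar> \<le> D^2/2 + lam* V^2/2 + B^2* Y/(p+1)"
proof -
  have 1: "d^2 \<le> D^2" using assms(1) by (metis abs_ge_zero power2_abs power_mono)
  have 2: "vv^2 \<le> V^2" using assms(2) by (metis abs_ge_zero power2_abs power_mono)
  have 3: "rr^2 \<le> B^2" using assms(5,6) by (intro power_mono) auto
  have 4: "rr^2* y \<le> B^2* Y" using 3 assms(3,4) by (intro mult_mono) auto
  have 5: "lam* vv^2 \<le> lam* V^2" using 2 assms(7) by simp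
  have 6: "rr^2* y/(p+1) \<le> B^2* Y/(p+1)" using 4 assms(8) by (simp add: divide_right_mono)
  have 7: "0 \<le> rr^2* y/(p+1)" using assms(3,8) by simp
  have 8: "0 \<le> lam* vv^2" using assms(7) by simp
  have "0 \<le> d^2/2 + (lam* vv^2/2 + rr^2* y/(p+1))" using 7 8 by simp
  then show ?thesis using 1 5 6 by simp
qed

lemma Ybound:
  fixes d D vv V a1 A1 a2 A2 :: real
  assumes "\<bar>d\<bar> \<le> D" "\<bar>vv\<bar> \<le> V" "\<bar>a1\<bar> \<le> A1" "\<bar>a2\<bar> \<le> A2"
  shows "\<bar>a2* vv/4 - a1* d/2\<bar> \<le> A2* V/4 + A1* D/2"
proof -
  have "\<bar>a2* vv\<bar> \<le> A2* V" using assms by (simp add: abs_mult mult_mono)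
  moreover have "\<bar>a1* d\<bar> \<le> A1* D" using assms by (simp add: abs_mult mult_mono)
  ultimately show ?thesis by simp
qed

lemma isCont_at_right: "isCont f x \<Longrightarrow> (f \<longlongrightarrow> f x) (at_right x)"
  for f :: "real \<Rightarrow> real"
  unfolding isCont_def by (rule tendsto_mono[OF at_le[OF subset_UNIV]])

lemma isCont_at_left: "isCont f x \<Longrightarrow> (f \<longlongrightarrow> f x) (at_left x)"
  for f :: "real \<Rightarrow> real"
  unfolding isCont_def by (rule tendsto_mono[OF at_le[OF subset_UNIV]])

theorem corollary1p8:
  fixes p lam b :: real and u :: "real \<Rightarrow> real"
  assumes "p > 5" and "lam > 0" and "b > 0"
    and "positive_radial_solution p lam b u"
  shows "(2 * sqrt (2 * (p - 5)) / (p + 3) + arccos (- sqrt ((p - 5) / (p + 3)))) / sqrt lam < b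
         \<and> b < pi / sqrt lam"
proof -
  note p = assms(1) and lam = assms(2) and b = assms(3)
  from assms(4) obtain du where
    cont: "continuous_on {0..b} u" and
    du_w: "\<forall>r\<in>{0..<b}. (u has_real_derivative du r) (at r within {0..b})" and
    dd_ex: "\<forall>r\<in>{0<..<b}. \<exists>d2. (du has_real_derivative d2) (at r) \<and>
              d2 + 2 / r * du r + lam * u r + (u r) powr p = 0" and
    du0: "du 0 = 0" and ub: "u b = 0" and pos: "\<forall>r\<in>{0..<b}. u r > 0"
    unfolding positive_radial_solution_def by blast
  from bchoice[OF dd_ex] obtain dd where dd: "\<forall>r\<in>{0<..<b}. (du has_real_derivative dd r) (at r) \<and>
              dd r + 2 / r * du r + lam * u r + (u r) powr p = 0" by blast
  have du_d: "(du has_real_derivative dd r) (at r)" if "0 < r" "r < b" for r using dd that by auto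
  have dd_eq: "dd r + 2 / r * du r + lam * u r + (u r) powr p = 0" if "0 < r" "r < b" for r using dd that by auto
  have du_at: "(u has_real_derivative du r) (at r)" if "0 < r" "r < b" for r
  proof -
    have "r \<in> {0..<b}" using that by auto
    then have "(u has_real_derivative du r) (at r within {0..b})" using du_w by blast
    moreover have "at r within {0..b} = at r" using that by (intro at_within_interior) auto
    ultimately show ?thesis by simp
  qed
  have upos: "0 < u r" if "0 \<le> r" "r < b" for r using pos that by auto
  have unn: "0 \<le> u r" if "0 \<le> r" "r \<le> b" for r
    using upos[of r] ub that by (cases "r = b") auto
  have "compact (u ` {0..b})" by (rule compact_continuous_image[OF cont]) simp
  then obtain U where U': "\<forall>x\<in>u ` {0..b}. norm x \<le> U" using compact_imp_bounded bounded_iff by metis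
  have U: "u r \<le> U" if "0 \<le> r" "r \<le> b" for r using U' that by force
  have U0: "0 \<le> U" using unn[of 0] U[of 0] b by auto
  obtain e0 M0 where e0: "e0 > 0" and M0: "\<And>r. 0 < r \<Longrightarrow> r < e0 \<Longrightarrow> \<bar>du r\<bar> \<le> M0"
    using du_bounds(1)[OF b lam p du_w du_d dd_eq du0 unn U] by blast
  obtain Mb where Mb: "\<And>r. b/2 \<le> r \<Longrightarrow> r < b \<Longrightarrow> \<bar>du r\<bar> \<le> Mb"
    using du_bounds(2)[OF b lam p du_w du_d dd_eq du0 unn U] by blast
  define mu where "mu = sqrt lam"
  have mu: "mu > 0" and mu2: "mu * mu = lam" unfolding mu_def using lam by auto
  define v where "v r = r * u r" for r
  define dv where "dv r = u r + r * du r" for r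
  have v_d: "(v has_real_derivative dv r) (at r)" if "0 < r" "r < b" for r
    unfolding v_def[abs_def] dv_def by (auto intro!: derivative_eq_intros du_at[OF that])
  have dv_d: "(dv has_real_derivative (-(lam * v r) - r * u r powr p)) (at r)" if "0 < r" "r < b" for r
  proof -
    have "(dv has_real_derivative (du r + (du r + r * dd r))) (at r)"
      unfolding dv_def[abs_def] by (auto intro!: derivative_eq_intros du_at[OF that] du_d[OF that])
    moreover have "du r + (du r + r * dd r) = -(lam * v r) - r * u r powr p"
    proof -
      have "r * dd r + 2 * du r + r * (lam * u r + u r powr p) = r * (dd r + 2 / r * du r + lam * u r + (u r) powr p)"
        using that by (simp add: field_simps)
      also have "\<dots> = 0" using dd_eq[OF that] by simp
      finally show ?thesis unfolding v_def by (simp add: algebra_simps)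
    qed
    ultimately show ?thesis by simp
  qed
  have dvb: "\<bar>dv r\<bar> \<le> U + b * M" if "0 < r" "r < b" "\<bar>du r\<bar> \<le> M" for r M
  proof -
    have "\<bar>r * du r\<bar> \<le> b * M" using that by (simp add: abs_mult mult_mono)
    moreover have "\<bar>u r\<bar> \<le> U" using unn[of r] U[of r] that by simp
    ultimately show ?thesis unfolding dv_def by simp
  qed
  have vb: "\<bar>v r\<bar> \<le> b * U" if "0 \<le> r" "r \<le> b" for r
    unfolding v_def using that unn[of r] U[of r] by (simp add: abs_mult mult_mono)
  have ev0: "eventually (\<lambda>r. 0 < r \<and> r < b \<and> \<bar>du r\<bar> \<le> M0) (at_right 0)"
    unfolding eventually_at_right_field using e0 b M0 by (intro exI[of _ "min e0 b"]) auto
  have evb: "eventually (\<lambda>r. b/2 < r \<and> r < b \<and> \<bar>du r\<bar> \<le> Mb) (at_left b)"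
    unfolding eventually_at_left_field using b Mb by (intro exI[of _ "b/2"]) auto
  have u0: "(u \<longlongrightarrow> u 0) (at_right 0)"
    using cont b unfolding continuous_on_def by (metis atLeastAtMost_iff at_within_Icc_at_right less_le_not_le order_refl)
  have ubl: "(u \<longlongrightarrow> 0) (at_left b)"
    using cont b ub unfolding continuous_on_def by (metis atLeastAtMost_iff at_within_Icc_at_left less_le_not_le order_refl)
  have v0: "(v \<longlongrightarrow> 0) (at_right 0)"
  proof -
    have "((\<lambda>r. r * u r) \<longlongrightarrow> 0 * u 0) (at_right 0)" by (intro tendsto_intros u0)
    then show ?thesis unfolding v_def[abs_def] by simp
  qed
  have vbl: "(v \<longlongrightarrow> 0) (at_left b)"
  proof -
    have "((\<lambda>r. r * u r) \<longlongrightarrow> b * 0) (at_left b)" by (intro tendsto_intros ubl)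
    then show ?thesis unfolding v_def[abs_def] by simp
  qed
  have upper: "b < pi / mu"
  proof (rule ccontr)
    assume "\<not> b < pi / mu"
    define c where "c = pi / mu"
    have c: "0 < c" "c \<le> b" using \<open>\<not> b < pi / mu\<close> mu unfolding c_def by auto
    define F where "F = (\<lambda>r. sin (mu * r) * dv r - v r * (mu * cos (mu * r)))"
    have dF: "(F has_real_derivative -(r * u r powr p * sin (mu * r))) (at r)" if "0 < r" "r < b" for r
    proof -
      have "(F has_real_derivative
              (cos (mu * r) * mu * dv r + sin (mu * r) * (-(lam * v r) - r * u r powr p)
               - (dv r * (mu * cos (mu * r)) + v r * (mu * (- sin (mu * r) * mu))))) (at r)"
        unfolding F_def by (rule derivative_eq_intros v_d[OF that] dv_d[OF that] refl | simp)+
      moreover have "cos (mu * r) * mu * dv r + sin (mu * r) * (-(lam * v r) - r * u r powr p)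
               - (dv r * (mu * cos (mu * r)) + v r * (mu * (- sin (mu * r) * mu)))
               = -(r * u r powr p * sin (mu * r))"
        using mu2 by (simp add: algebra_simps)
      ultimately show ?thesis by simp
    qed
    show False
    proof (rule decr_contra[of c F "\<lambda>r. -(r * u r powr p * sin (mu * r))" "c/2"])
      show "0 < c" by fact
      show "(F has_real_derivative -(r * u r powr p * sin (mu * r))) (at r)" if "0 < r" "r < c" for r
        using dF that c by auto
      show "-(r * u r powr p * sin (mu * r)) \<le> 0" if "0 < r" "r < c" for r
      proof -
        have "0 < mu * r" "mu * r < pi" using that mu unfolding c_def by (auto simp: field_simps)
        then have "sin (mu * r) > 0" by (rule sin_gt_zero)
        then show ?thesis using that by simp
      qed
      show "0 < c/2" "c/2 < c" using c by auto
      have "mu * (c/2) = pi/2" unfolding c_def using mu by simp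
      moreover have "u (c/2) > 0" using upos[of "c/2"] c by auto
      ultimately show "-(c/2 * u (c/2) powr p * sin (mu * (c/2))) < 0" using c by simp
      show "(F \<longlongrightarrow> 0) (at_right 0)"
      proof -
        have s0: "((\<lambda>r. sin (mu * r)) \<longlongrightarrow> 0) (at_right 0)"
          using isCont_at_right[where f="\<lambda>r. sin (mu * r)" and x=0] by (simp add: continuous_intros)
        have t1: "((\<lambda>r. sin (mu * r) * dv r) \<longlongrightarrow> 0) (at_right 0)"
          using s0 by (rule null_times_bounded[where K="U + b * M0"]) (use ev0 in \<open>eventually_elim, auto intro: dvb\<close>)
        have t2: "((\<lambda>r. v r * (mu * cos (mu * r))) \<longlongrightarrow> 0) (at_right 0)"
          using v0 by (rule null_times_bounded[where K=mu]) (use mu in \<open>auto simp: abs_mult\<close>)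
        show ?thesis unfolding F_def using tendsto_diff[OF t1 t2] by simp
      qed
      show "(F \<longlongrightarrow> (if c < b then F c else 0)) (at_left c)"
      proof (cases "c < b")
        case True
        have "isCont F c" using dF[of c] True c by (auto intro: DERIV_isCont)
        then show ?thesis using True isCont_at_left by simp
      next
        case False
        then have cb: "c = b" using c by simp
        have mb: "mu * b = pi" using cb mu unfolding c_def by auto
        have s0: "((\<lambda>r. sin (mu * r)) \<longlongrightarrow> 0) (at_left b)"
          using isCont_at_left[where f="\<lambda>r. sin (mu * r)" and x=b] mb by (simp add: continuous_intros)
        have t1: "((\<lambda>r. sin (mu * r) * dv r) \<longlongrightarrow> 0) (at_left b)"
          using s0 by (rule null_times_bounded[where K="U + b * Mb"]) (rule eventually_mono[OF evb], use b in \<open>auto intro: dvb\<close>)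
        have t2: "((\<lambda>r. v r * (mu * cos (mu * r))) \<longlongrightarrow> 0) (at_left b)"
          using vbl by (rule null_times_bounded[where K=mu]) (use mu in \<open>auto simp: abs_mult\<close>)
        show ?thesis unfolding F_def using tendsto_diff[OF t1 t2] False cb by simp
      qed
      show "0 \<le> (if c < b then F c else 0)"
      proof (cases "c < b")
        case True
        have "F c = v c * mu" unfolding F_def c_def using mu by simp
        moreover have "v c > 0" unfolding v_def using upos[of c] True c by simp
        ultimately show ?thesis using True mu by simp
      qed simp
    qed
  qed
  define T where "T = 2 * sqrt (2 * (p - 5)) / (p + 3) + arccos (- sqrt ((p - 5) / (p + 3)))"
  have lower: "T / mu < b"
  proof (rule ccontr)
    assume "\<not> T / mu < b"
    then have bT: "mu * b \<le> T" using mu by (simp add: field_simps)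
    define bt where "bt = mu * b"
    have bt: "0 < bt" "bt < pi" "bt \<le> T" unfolding bt_def using bT upper mu b by (auto simp: field_simps)
    define a where "a = (\<lambda>r. (cos (mu * (b - 2 * r)) - cos (mu * b)) / 2)"
    define a1 where "a1 = (\<lambda>r. mu * sin (mu * (b - 2 * r)))"
    define a2 where "a2 = (\<lambda>r. -2 * lam * cos (mu * (b - 2 * r)))"
    have a_d: "(a has_real_derivative a1 r) (at r)" for r
      unfolding a_def a1_def by (auto intro!: derivative_eq_intros simp: algebra_simps)
    have a1_d: "(a1 has_real_derivative a2 r) (at r)" for r
      unfolding a1_def a2_def using mu2[symmetric] by (auto intro!: derivative_eq_intros simp: algebra_simps)
    have a2_d: "(a2 has_real_derivative -4 * lam * a1 r) (at r)" for r
      unfolding a1_def a2_def by (auto intro!: derivative_eq_intros simp: algebra_simps)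
    define P where "P = (\<lambda>r. lam * (v r)^2 / 2 + r^2 * (u r powr (p+1)) / (p+1))"
    define E where "E = (\<lambda>r. a r * ((dv r)^2 / 2 + P r) + v r * (a2 r * v r / 4 - a1 r * dv r / 2))"
    define dE where "dE = (\<lambda>r. r * (u r powr p * u r) / (2 * (p+1)) * ((p+1+2) * r * a1 r - 2 * (p+1-2) * a r))"
    have dE_d: "(E has_real_derivative dE r) (at r)" if "0 < r" "r < b" for r
    proof -
      have p1: "p + 1 \<noteq> 0" using p by simp
      define W where "W = (\<lambda>r. u r powr (p+1))"
      have up: "(W has_real_derivative (p+1) * u r powr p * du r) (at r)"
        unfolding W_def using DERIV_fun_powr[OF du_at[OF that] upos[of r], of "p+1"] that by simp
      have upp: "W r = u r powr p * u r" unfolding W_def using upos[of r] that by (simp add: powr_add)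
      have PW: "P = (\<lambda>r. lam * (v r)^2 / 2 + r^2 * W r / (p+1))" unfolding P_def W_def by simp
      have P_d: "(P has_real_derivative
          (lam * (2 * v r * dv r) / 2 + (2 * r * W r + r^2 * ((p+1) * u r powr p * du r)) / (p+1))) (at r)"
        unfolding PW
        apply (rule DERIV_cong)
         apply (rule derivative_eq_intros v_d[OF that] up p1 refl | (simp; fail))+
        apply (simp add: field_simps p1)?
        done
      show ?thesis unfolding E_def dE_def
        by (rule E_deriv[where q="\<lambda>r. u r powr p" and u=u and du=du and v=v and dv=dv and W=W and a=a and aa=a1 and aaa=a2 and P=P and lam=lam and c="p+1" and r=r, OF v_d[OF that] dv_d[OF that] a_d a1_d a2_d P_d])
           (auto simp: PW upp v_def dv_def p1)
    qed
    have bracket: "(p+1+2) * r * a1 r - 2 * (p+1-2) * a r =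
        - ((p-1) * (cos (bt - 2 * (mu * r)) - cos bt) - (p+3) * (mu * r) * sin (bt - 2 * (mu * r)))" for r
    proof -
      have e: "mu * (b - 2 * r) = bt - 2 * (mu * r)" unfolding bt_def by (simp add: algebra_simps)
      have e2: "cos (mu * b) = cos bt" unfolding bt_def by simp
      show ?thesis unfolding a_def a1_def e e2 by (simp add: field_simps)
    qed
    have fac: "0 \<le> r * (u r powr p * u r) / (2 * (p+1))" if "0 < r" "r < b" for r
      using upos[of r] that p by simp
    show False
    proof (rule decr_contra[of b E dE "3* b/4"])
      show "0 < b" by fact
      show "(E has_real_derivative dE r) (at r)" if "0 < r" "r < b" for r using dE_d that by blast
      show "dE r \<le> 0" if "0 < r" "r < b" for r
      proof -
        have "0 \<le> (p-1) * (cos (bt - 2 * (mu * r)) - cos bt) - (p+3) * (mu * r) * sin (bt - 2 * (mu * r))"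
          using h_nonneg[of p bt "mu * r"] p bt that mu unfolding T_def bt_def by (auto simp: mult_left_mono)
        then have B: "(p+1+2) * r * a1 r - 2 * (p+1-2) * a r \<le> 0" unfolding bracket by simp
        have eq: "dE r = (r * (u r powr p * u r) / (2 * (p+1))) * ((p+1+2) * r * a1 r - 2 * (p+1-2) * a r)"
          unfolding dE_def by (rule refl)
        show ?thesis using eq mult_nonneg_nonpos[OF fac[OF that] B] by linarith
      qed
      show "0 < 3* b/4" "3* b/4 < b" using b by auto
      have "0 < (p-1) * (cos (bt - 2 * (3* bt/4)) - cos bt) - (p+3) * (3* bt/4) * sin (bt - 2 * (3* bt/4))"
        using h_pos[of p bt] p bt by simp
      moreover have e3: "mu * (3* b/4) = 3* bt/4" unfolding bt_def by simp
      have "(p+1+2) * (3* b/4) * a1 (3* b/4) - 2 * (p+1-2) * a (3* b/4) =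
        - ((p-1) * (cos (bt - 2 * (3* bt/4)) - cos bt) - (p+3) * (3* bt/4) * sin (bt - 2 * (3* bt/4)))"
        using bracket[of "3* b/4"] unfolding e3 .
      ultimately have B: "(p+1+2) * (3* b/4) * a1 (3* b/4) - 2 * (p+1-2) * a (3* b/4) < 0" by linarith
      have F: "0 < 3* b/4 * (u (3* b/4) powr p * u (3* b/4)) / (2 * (p+1))" using upos[of "3* b/4"] b p by simp
      have eq: "dE (3* b/4) = (3* b/4 * (u (3* b/4) powr p * u (3* b/4)) / (2 * (p+1))) * ((p+1+2) * (3* b/4) * a1 (3* b/4) - 2 * (p+1-2) * a (3* b/4))"
        unfolding dE_def by (rule refl)
      show "dE (3* b/4) < 0" using eq mult_pos_neg[OF F B] by linarith
      have Xb: "\<bar>(dv r)^2 / 2 + P r\<bar> \<le> (U + b * M)^2/2 + lam * (b * U)^2/2 + b^2 * (U powr (p+1)) / (p+1)"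
        if "0 < r" "r < b" "\<bar>du r\<bar> \<le> M" for r M
        unfolding P_def
        by (rule Xbound) (use that dvb vb unn U p lam in \<open>auto intro: powr_mono2\<close>)
      have Yb: "\<bar>a2 r * v r / 4 - a1 r * dv r / 2\<bar> \<le> (2 * lam) * (b * U) / 4 + mu * (U + b * M) / 2"
        if "0 < r" "r < b" "\<bar>du r\<bar> \<le> M" for r M
        by (rule Ybound) (use that dvb vb lam mu in \<open>auto simp: a1_def a2_def abs_mult\<close>)
      have a0: "(a \<longlongrightarrow> 0) (at_right 0)"
        using isCont_at_right[where f=a and x=0] DERIV_isCont[OF a_d] unfolding a_def by simp
      have ab: "(a \<longlongrightarrow> 0) (at_left b)"
        using isCont_at_left[where f=a and x=b] DERIV_isCont[OF a_d] unfolding a_def by simp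
      show "(E \<longlongrightarrow> 0) (at_right 0)"
      proof -
        have t1: "((\<lambda>r. a r * ((dv r)^2 / 2 + P r)) \<longlongrightarrow> 0) (at_right 0)"
          using a0 by (rule null_times_bounded) (rule eventually_mono[OF ev0], rule Xb, auto)
        have t2: "((\<lambda>r. v r * (a2 r * v r / 4 - a1 r * dv r / 2)) \<longlongrightarrow> 0) (at_right 0)"
          using v0 by (rule null_times_bounded) (rule eventually_mono[OF ev0], rule Yb, auto)
        show ?thesis unfolding E_def using tendsto_add[OF t1 t2] by simp
      qed
      show "(E \<longlongrightarrow> 0) (at_left b)"
      proof -
        have t1: "((\<lambda>r. a r * ((dv r)^2 / 2 + P r)) \<longlongrightarrow> 0) (at_left b)"
          using ab by (rule null_times_bounded) (rule eventually_mono[OF evb], rule Xb, use b in auto)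
        have t2: "((\<lambda>r. v r * (a2 r * v r / 4 - a1 r * dv r / 2)) \<longlongrightarrow> 0) (at_left b)"
          using vbl by (rule null_times_bounded) (rule eventually_mono[OF evb], rule Yb, use b in auto)
        show ?thesis unfolding E_def using tendsto_add[OF t1 t2] by simp
      qed
    qed simp
  qed
  show ?thesis using lower upper unfolding T_def mu_def by simp
qed


end
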